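(* Let $G$ be a $4$-Sachs minimal graph in $\mathfrak{G}_{n,m}$ and let $\mathbf{B}_G$ be a spanning subgraph of $G$ which is a difference graph with bipartition $(U,W)$. Let $\overline{\mathbf{B}_G}$ be the graph obtained from $G$ by deleting all edges of $\mathbf{B}_G$ and then deleting all isolated vertices. If $V(\overline{\mathbf{B}_G})\subseteq U$, then $$\mathbf{a}_4(G)=\mathbf{a}_4(\mathbf{B}_G)+\mathbf{a}_4(\overline{\mathbf{B}_G})+\sum_{e_i\in E(\overline{\mathbf{B}_G})}\epsilon(\mathbf{B}_G\setminus V(e_i))-2\sum_{\{e_p,e_q\}}n_W(e_p,e_q),$$ where the first sum is over all edges $e_i$ of $\overline{\mathbf{B}_G}$ and the second over all pairs of distinct adjacent edges $e_p,e_q$ of $\overline{\mathbf{B}_G}$.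
   Context: $\mathfrak{G}_{n,m}$ is the set of connected simple graphs with $n$ vertices and $m$ edges. $\mathbf{a}_4(G)$ is the coefficient of $\lambda^{\nu(G)-4}$ in $\det(\lambda\mathbf{I}-\mathbf{A}(G))$ (equivalently, number of 2-matchings minus twice the number of 4-cycles). $G\in\mathfrak{G}_{n,m}$ is $4$-Sachs minimal if $\mathbf{a}_4(G)=\min\{\mathbf{a}_4(H):H\in\mathfrak{G}_{n,m}\}$. A difference graph is a bipartite graph in which the neighborhoods of the vertices of one part are linearly ordered by inclusion. $\epsilon(H)$ is the number of edges of $H$; $V(e)$ is the set of endpoints of an edge $e$; $\mathbf{B}_G\setminus V(e_i)$ is obtained by deleting these two vertices and incident edges. For adjacent edges $e_p=xx_p$, $e_q=xx_q$ of $\overline{\mathbf{B}_G}$, $n_W(e_p,e_q)=|\{w\in W: wx_p\in E(G),\ wx_q\in E(G)\}|$. *)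

theory Defs
  imports Main
begin

type_synonym 'a ugraph = "'a set \<times> 'a set set"

definition verts :: "'a ugraph \<Rightarrow> 'a set" where "verts G = fst G"
definition edges :: "'a ugraph \<Rightarrow> 'a set set" where "edges G = snd G"

definition simple_graph :: "'a ugraph \<Rightarrow> bool" where
  "simple_graph G \<longleftrightarrow> finite (verts G) \<and>
     (\<forall>e\<in>edges G. \<exists>u v. u \<in> verts G \<and> v \<in> verts G \<and> u \<noteq> v \<and> e = {u, v})"

definition connected_graph :: "'a ugraph \<Rightarrow> bool" where
  "connected_graph G \<longleftrightarrow> simple_graph G \<and>
     (\<forall>u\<in>verts G. \<forall>v\<in>verts G. (u, v) \<in> {(x, y). {x, y} \<in> edges G}\<^sup>*)"

definition graph_class :: "nat \<Rightarrow> nat \<Rightarrow> 'a ugraph set" where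
  "graph_class n m = {G. connected_graph G \<and> card (verts G) = n \<and> card (edges G) = m}"

definition two_matchings :: "'a ugraph \<Rightarrow> 'a set set set" where
  "two_matchings G = {{e, f} | e f. e \<in> edges G \<and> f \<in> edges G \<and> e \<inter> f = {}}"

definition four_cycles :: "'a ugraph \<Rightarrow> 'a set set set" where
  "four_cycles G = {C. C \<subseteq> edges G \<and> (\<exists>a b c d. distinct [a, b, c, d] \<and>
      C = {{a, b}, {b, c}, {c, d}, {d, a}})}"

definition a4 :: "'a ugraph \<Rightarrow> int" where
  "a4 G = int (card (two_matchings G)) - 2 * int (card (four_cycles G))"

definition sachs4_minimal :: "nat \<Rightarrow> nat \<Rightarrow> 'a ugraph \<Rightarrow> bool" where
  "sachs4_minimal n m G \<longleftrightarrow> G \<in> graph_class n m \<and> (\<forall>H \<in> (graph_class n m :: 'a ugraph set). a4 G \<le> a4 H)"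

definition spanning_subgraph :: "'a ugraph \<Rightarrow> 'a ugraph \<Rightarrow> bool" where
  "spanning_subgraph B G \<longleftrightarrow> verts B = verts G \<and> edges B \<subseteq> edges G"

definition nbhd :: "'a ugraph \<Rightarrow> 'a \<Rightarrow> 'a set" where
  "nbhd G x = {y. {x, y} \<in> edges G}"

definition difference_graph :: "'a ugraph \<Rightarrow> 'a set \<Rightarrow> 'a set \<Rightarrow> bool" where
  "difference_graph B U W \<longleftrightarrow> simple_graph B \<and> U \<inter> W = {} \<and> U \<union> W = verts B \<and>
     (\<forall>e\<in>edges B. \<exists>u w. u \<in> U \<and> w \<in> W \<and> e = {u, w}) \<and>
     ((\<forall>x\<in>U. \<forall>y\<in>U. nbhd B x \<subseteq> nbhd B y \<or> nbhd B y \<subseteq> nbhd B x) \<or>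
      (\<forall>x\<in>W. \<forall>y\<in>W. nbhd B x \<subseteq> nbhd B y \<or> nbhd B y \<subseteq> nbhd B x))"

text \<open>Complement of B in G: delete edges of B, then isolated vertices.\<close>
definition co_graph :: "'a ugraph \<Rightarrow> 'a ugraph \<Rightarrow> 'a ugraph" where
  "co_graph G B = (\<Union>(edges G - edges B), edges G - edges B)"

text \<open>Number of edges of H after deleting the vertices of e (and incident edges).\<close>
definition eps_del :: "'a ugraph \<Rightarrow> 'a set \<Rightarrow> nat" where
  "eps_del H e = card {f \<in> edges H. f \<inter> e = {}}"

definition adj_edge_pairs :: "'a ugraph \<Rightarrow> 'a set set set" where
  "adj_edge_pairs H = {{ep, eq} | ep eq. ep \<in> edges H \<and> eq \<in> edges H \<and> ep \<noteq> eq \<and> ep \<inter> eq \<noteq> {}}"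

text \<open>n_W(e_p,e_q) for e_p = x x_p, e_q = x x_q: the non-shared endpoints are
  (e_p \<union> e_q) - (e_p \<inter> e_q) = {x_p, x_q}.\<close>
definition n_W :: "'a ugraph \<Rightarrow> 'a set \<Rightarrow> 'a set set \<Rightarrow> nat" where
  "n_W G W P = card {w \<in> W. \<forall>y \<in> \<Union>P - \<Inter>P. {w, y} \<in> edges G}"

end

theory Submission
  imports Defs
begin

definition tmE :: "'a set set \<Rightarrow> 'a set set set" where
  "tmE E = {{e, f} | e f. e \<in> E \<and> f \<in> E \<and> e \<inter> f = {}}"

lemma tm_split:
  assumes f1: "finite E1" and f2: "finite E2" and dj: "E1 \<inter> E2 = {}"
    and ne: "\<forall>e\<in>E1\<union>E2. e \<noteq> {}"
  shows "card (tmE (E1 \<union> E2)) = card (tmE E1) + card (tmE E2) + (\<Sum>e\<in>E2. card {f\<in>E1. f \<inter> e = {}})"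
proof -
  define M where "M = {{e, f} | e f. e \<in> E2 \<and> f \<in> E1 \<and> e \<inter> f = {}}"
  have eq: "tmE (E1 \<union> E2) = tmE E1 \<union> tmE E2 \<union> M"
  proof
    show "tmE (E1 \<union> E2) \<subseteq> tmE E1 \<union> tmE E2 \<union> M"
    proof
      fix X assume "X \<in> tmE (E1 \<union> E2)"
      then obtain e f where X: "X = {e,f}" "e \<in> E1 \<union> E2" "f \<in> E1 \<union> E2" "e \<inter> f = {}"
        unfolding tmE_def by blast
      show "X \<in> tmE E1 \<union> tmE E2 \<union> M"
      proof (cases "e \<in> E2")
        case True
        then show ?thesis
        proof (cases "f \<in> E2")
          case True
          then show ?thesis using X \<open>e \<in> E2\<close> unfolding tmE_def by blast
        next
          case False
          then show ?thesis using X \<open>e \<in> E2\<close> unfolding M_def by blast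
        qed
      next
        case False
        then show ?thesis
        proof (cases "f \<in> E2")
          case True
          have "X = {f,e}" using X by blast
          then show ?thesis using X \<open>f \<in> E2\<close> \<open>e \<notin> E2\<close> unfolding M_def by blast
        next
          case False
          then show ?thesis using X \<open>e \<notin> E2\<close> unfolding tmE_def by blast
        qed
      qed
    qed
    show "tmE E1 \<union> tmE E2 \<union> M \<subseteq> tmE (E1 \<union> E2)"
      unfolding tmE_def M_def by blast
  qed
  have fin0: "tmE E \<subseteq> Pow E" for E :: "'a set set" unfolding tmE_def by auto
  have fin: "finite (tmE E)" if "finite E" for E :: "'a set set"
    using fin0[of E] that finite_subset by blast
  have finM: "finite M"
  proof -
    have "M \<subseteq> Pow (E1 \<union> E2)" unfolding M_def by auto
    thus ?thesis using f1 f2 finite_subset by blast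
  qed
  have tne: "X \<noteq> {}" if "X \<in> tmE E" for X E using that unfolding tmE_def by auto
  have d1: "tmE E1 \<inter> tmE E2 = {}"
  proof -
    { fix X assume X: "X \<in> tmE E1" "X \<in> tmE E2"
      then have "X \<subseteq> E1 \<inter> E2" using fin0 by blast
      then have False using dj tne[OF X(1)] by blast }
    thus ?thesis by blast
  qed
  have d2: "(tmE E1 \<union> tmE E2) \<inter> M = {}"
  proof -
    { fix X assume X: "X \<in> tmE E1 \<union> tmE E2" "X \<in> M"
      then have "X \<subseteq> E1 \<or> X \<subseteq> E2" using fin0 by blast
      moreover obtain e f where "X = {e,f}" "e \<in> E2" "f \<in> E1" using X(2) unfolding M_def by blast
      ultimately have False using dj by blast }
    thus ?thesis by blast
  qed
  have Mimg: "M = (\<lambda>(e,f). {e,f}) ` (SIGMA e:E2. {f\<in>E1. f \<inter> e = {}})"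
  proof
    show "M \<subseteq> (\<lambda>(e,f). {e,f}) ` (SIGMA e:E2. {f\<in>E1. f \<inter> e = {}})"
    proof
      fix X assume "X \<in> M"
      then obtain e f where X: "X = {e,f}" "e \<in> E2" "f \<in> E1" "e \<inter> f = {}" unfolding M_def by blast
      then have "(e,f) \<in> (SIGMA e:E2. {f\<in>E1. f \<inter> e = {}})" by (simp add: Int_commute)
      moreover have "X = (\<lambda>(e,f). {e,f}) (e,f)" using X by simp
      ultimately show "X \<in> (\<lambda>(e,f). {e,f}) ` (SIGMA e:E2. {f\<in>E1. f \<inter> e = {}})" by (rule rev_image_eqI)
    qed
    show "(\<lambda>(e,f). {e,f}) ` (SIGMA e:E2. {f\<in>E1. f \<inter> e = {}}) \<subseteq> M"
    proof
      fix X assume "X \<in> (\<lambda>(e,f). {e,f}) ` (SIGMA e:E2. {f\<in>E1. f \<inter> e = {}})"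
      then obtain z where z: "z \<in> (SIGMA e:E2. {f\<in>E1. f \<inter> e = {}})" "X = (\<lambda>(e,f). {e,f}) z" by (rule imageE)
      obtain e f where ef: "z = (e,f)" by (cases z)
      have X: "X = {e,f}" "e \<in> E2" "f \<in> E1" "f \<inter> e = {}" using z ef by auto
      then have "e \<inter> f = {}" by blast
      then show "X \<in> M" unfolding M_def using X by blast
    qed
  qed
  have inj: "inj_on (\<lambda>(e,f). {e,f}) (SIGMA e:E2. {f\<in>E1. f \<inter> e = {}})"
  proof (rule inj_onI)
    fix x y assume x: "x \<in> (SIGMA e:E2. {f\<in>E1. f \<inter> e = {}})" and y: "y \<in> (SIGMA e:E2. {f\<in>E1. f \<inter> e = {}})"
      and xy: "(\<lambda>(e,f). {e,f}) x = (\<lambda>(e,f). {e,f}) y"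
    obtain e f where xe0: "x = (e,f)" by (cases x)
    obtain e' f' where ye0: "y = (e',f')" by (cases y)
    have xe: "x = (e,f)" "e \<in> E2" "f \<in> E1" using x xe0 by auto
    have ye: "y = (e',f')" "e' \<in> E2" "f' \<in> E1" using y ye0 by auto
    have "{e,f} = {e',f'}" using xy xe ye by simp
    then have "(e = e' \<and> f = f') \<or> (e = f' \<and> f = e')" by (simp add: doubleton_eq_iff)
    then have "e = e' \<and> f = f'" using xe ye dj by blast
    then show "x = y" using xe ye by simp
  qed
  have "card M = card (SIGMA e:E2. {f\<in>E1. f \<inter> e = {}})"
    unfolding Mimg by (rule card_image[OF inj])
  also have "\<dots> = (\<Sum>e\<in>E2. card {f\<in>E1. f \<inter> e = {}})"
    using f1 f2 by (simp add: card_SigmaI)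
  finally have cM: "card M = (\<Sum>e\<in>E2. card {f\<in>E1. f \<inter> e = {}})" .
  show ?thesis unfolding eq
    using d1 d2 fin[OF f1] fin[OF f2] finM cM
    by (simp add: card_Un_disjoint)
qed

definition fcE :: "'a set set \<Rightarrow> 'a set set set" where
  "fcE E = {C. C \<subseteq> E \<and> (\<exists>a b c d. distinct [a, b, c, d] \<and>
      C = {{a, b}, {b, c}, {c, d}, {d, a}})}"

definition adjE :: "'a set set \<Rightarrow> 'a set set set" where
  "adjE E = {{ep, eq} | ep eq. ep \<in> E \<and> eq \<in> E \<and> ep \<noteq> eq \<and> ep \<inter> eq \<noteq> {}}"

lemma fc_split:
  fixes E EB :: "'a set set" and U W :: "'a set"
  assumes finE: "finite E" and sub: "EB \<subseteq> E"
    and twoE: "\<forall>e\<in>E. \<exists>u v. u \<noteq> v \<and> u \<in> U \<union> W \<and> v \<in> U \<union> W \<and> e = {u, v}"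
    and Bed: "\<forall>e\<in>EB. \<exists>u w. u \<in> U \<and> w \<in> W \<and> e = {u, w}"
    and Ced: "\<forall>e\<in>E - EB. e \<subseteq> U"
    and disj: "U \<inter> W = {}" and finW: "finite W"
  shows "card (fcE E) = card (fcE EB) + card (fcE (E - EB))
     + (\<Sum>P\<in>adjE (E - EB). card {w\<in>W. \<forall>y\<in>\<Union>P - \<Inter>P. {w, y} \<in> E})"
proof -
  define EC where "EC = E - EB"
  have WW: False if "{x,y} \<in> E" "x \<in> W" "y \<in> W" for x y
  proof (cases "{x,y} \<in> EB")
    case True
    then obtain u w where "u \<in> U" "w \<in> W" "{x,y} = {u,w}" using Bed by blast
    then have "u \<in> {x,y}" by simp
    then show False using that disj \<open>u \<in> U\<close> by blast
  next
    case False
    then have "{x,y} \<subseteq> U" using Ced that by blast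
    then show False using that disj by auto
  qed
  have BW: "{x,y} \<in> EB \<longleftrightarrow> (x \<in> W \<or> y \<in> W)" if "{x,y} \<in> E" for x y
  proof
    assume "{x,y} \<in> EB"
    then obtain u w where "u \<in> U" "w \<in> W" "{x,y} = {u,w}" using Bed by blast
    then have "w \<in> {x,y}" by simp
    then show "x \<in> W \<or> y \<in> W" using \<open>w \<in> W\<close> by blast
  next
    assume "x \<in> W \<or> y \<in> W"
    show "{x,y} \<in> EB"
    proof (rule ccontr)
      assume "{x,y} \<notin> EB"
      then have "{x,y} \<subseteq> U" using Ced that by blast
      then show False using \<open>x \<in> W \<or> y \<in> W\<close> disj by auto
    qed
  qed
  have VU: "x \<in> U \<union> W" if "{x,y} \<in> E" for x y
  proof -
    have "\<exists>u v. u \<noteq> v \<and> u \<in> U \<union> W \<and> v \<in> U \<union> W \<and> {x,y} = {u,v}"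
      using twoE that by (rule bspec)
    then obtain u v where "u \<in> U \<union> W" "v \<in> U \<union> W" "{x,y} = {u,v}" by blast
    then have "x \<in> {u,v}" by (metis insertI1)
    then show ?thesis using \<open>u \<in> U \<union> W\<close> \<open>v \<in> U \<union> W\<close> by blast
  qed
  have ECU: "e \<subseteq> U" if "e \<in> EC" for e using Ced that EC_def by blast
  define S where "S = (SIGMA P:adjE EC. {w\<in>W. \<forall>y\<in>\<Union>P - \<Inter>P. {w, y} \<in> E})"
  define f :: "'a set set \<times> 'a \<Rightarrow> 'a set set" where "f = (\<lambda>(P, w). P \<union> (\<lambda>y. {w, y}) ` (\<Union>P - \<Inter>P))"
  define Mx where "Mx = {C\<in>fcE E. C \<inter> EB \<noteq> {} \<and> C \<inter> EC \<noteq> {}}"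
  have struct: "\<exists>x p q. P = {{x,p},{x,q}} \<and> distinct [x,p,q] \<and> x \<in> U \<and> p \<in> U \<and> q \<in> U
     \<and> w \<in> W \<and> {w,p} \<in> E \<and> {w,q} \<in> E \<and> {x,p} \<in> EC \<and> {x,q} \<in> EC
     \<and> f (P,w) = {{x,p},{x,q},{w,p},{w,q}}" if "(P,w) \<in> S" for P w
  proof -
    have Pa: "P \<in> adjE EC" and w: "w \<in> W" "\<forall>y\<in>\<Union>P - \<Inter>P. {w, y} \<in> E"
      using that unfolding S_def by auto
    from Pa obtain ep eq where P: "P = {ep,eq}" "ep \<in> EC" "eq \<in> EC" "ep \<noteq> eq" "ep \<inter> eq \<noteq> {}"
      unfolding adjE_def by blast
    obtain x where x: "x \<in> ep" "x \<in> eq" using P(5) by blast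
    have "ep \<in> E" "eq \<in> E" using P(2,3) unfolding EC_def by auto
    have "\<exists>u v. u \<noteq> v \<and> u \<in> U \<union> W \<and> v \<in> U \<union> W \<and> ep = {u,v}"
      using twoE \<open>ep \<in> E\<close> by (rule bspec)
    then obtain u1 v1 where uv1: "u1 \<noteq> v1" "ep = {u1,v1}" by blast
    have "\<exists>u v. u \<noteq> v \<and> u \<in> U \<union> W \<and> v \<in> U \<union> W \<and> eq = {u,v}"
      using twoE \<open>eq \<in> E\<close> by (rule bspec)
    then obtain u2 v2 where uv2: "u2 \<noteq> v2" "eq = {u2,v2}" by blast
    have "\<exists>p. ep = {x,p} \<and> x \<noteq> p"
    proof (cases "x = u1")
      case True then show ?thesis using uv1 by blast
    next
      case False then have "x = v1" using x uv1 by blast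
      then show ?thesis using uv1 by (metis insert_commute)
    qed
    then obtain p where p: "ep = {x,p}" "x \<noteq> p" by blast
    have "\<exists>q. eq = {x,q} \<and> x \<noteq> q"
    proof (cases "x = u2")
      case True then show ?thesis using uv2 by blast
    next
      case False then have "x = v2" using x uv2 by blast
      then show ?thesis using uv2 by (metis insert_commute)
    qed
    then obtain q where q: "eq = {x,q}" "x \<noteq> q" by blast
    have pq: "p \<noteq> q" using p q P(4) by blast
    have U3: "x \<in> U" "p \<in> U" "q \<in> U" using ECU P(2,3) p q by auto
    have D: "\<Union>P - \<Inter>P = {p,q}" unfolding P(1) p(1) q(1) using p(2) q(2) pq by auto
    have wE: "{w,p} \<in> E" "{w,q} \<in> E" using w(2) D by auto
    have fe0: "f (P,w) = P \<union> {{w,p},{w,q}}" unfolding f_def using D by simp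
    have Pe: "P = {{x,p},{x,q}}" using P(1) p(1) q(1) by simp
    have fe: "f (P,w) = {{x,p},{x,q},{w,p},{w,q}}" using fe0 Pe by (simp add: insert_commute)
    have dd: "distinct [x,p,q]" using p(2) q(2) pq by simp
    have ec: "{x,p} \<in> EC" "{x,q} \<in> EC" using P(2,3) p(1) q(1) by auto
    show ?thesis using Pe dd U3 w(1) wE ec fe by blast
  qed
  have cyc_ne: "C \<noteq> {}" if "C \<in> fcE X" for C X using that unfolding fcE_def by auto
  have part: "fcE E = fcE EB \<union> fcE EC \<union> Mx"
  proof
    show "fcE E \<subseteq> fcE EB \<union> fcE EC \<union> Mx"
    proof
      fix C assume C: "C \<in> fcE E"
      show "C \<in> fcE EB \<union> fcE EC \<union> Mx"
      proof (cases "C \<inter> EC = {}")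
        case True
        then have "C \<subseteq> EB" using C unfolding fcE_def EC_def by blast
        then show ?thesis using C unfolding fcE_def by blast
      next
        case False
        show ?thesis
        proof (cases "C \<inter> EB = {}")
          case True
          then have "C \<subseteq> EC" using C unfolding fcE_def EC_def by blast
          then show ?thesis using C unfolding fcE_def by blast
        next
          case False
          then show ?thesis using C \<open>C \<inter> EC \<noteq> {}\<close> unfolding Mx_def by blast
        qed
      qed
    qed
    show "fcE EB \<union> fcE EC \<union> Mx \<subseteq> fcE E"
      unfolding Mx_def fcE_def EC_def using sub by blast
  qed
  have fin: "finite (fcE X)" if "finite X" for X :: "'a set set"
  proof -
    have "fcE X \<subseteq> Pow X" unfolding fcE_def by auto
    thus ?thesis using that finite_subset by blast
  qed
  have finB: "finite EB" using finE sub finite_subset by blast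
  have finC: "finite EC" using finE EC_def by simp
  have finMx: "finite Mx" unfolding Mx_def using fin[OF finE] by simp
  have d1: "fcE EB \<inter> fcE EC = {}"
  proof -
    { fix C assume "C \<in> fcE EB" "C \<in> fcE EC"
      then have "C \<subseteq> EB \<inter> EC" unfolding fcE_def by blast
      then have "C = {}" unfolding EC_def by blast
      with cyc_ne \<open>C \<in> fcE EB\<close> have False by blast }
    thus ?thesis by blast
  qed
  have d2: "(fcE EB \<union> fcE EC) \<inter> Mx = {}"
  proof -
    { fix C assume C: "C \<in> fcE EB \<union> fcE EC" "C \<in> Mx"
      then have "C \<subseteq> EB \<or> C \<subseteq> EC" unfolding fcE_def by blast
      moreover have "C \<inter> EB \<noteq> {}" "C \<inter> EC \<noteq> {}" using C(2) unfolding Mx_def by auto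
      ultimately have False unfolding EC_def by blast }
    thus ?thesis by blast
  qed
  have L: "C \<in> f ` S" if "distinct [a,b,c,d]" "C = {{a,b},{b,c},{c,d},{d,a}}" "C \<subseteq> E"
      "a \<in> W" "b \<in> U" "c \<in> U" "d \<in> U" for C a b c d
  proof -
    have E4: "{a,b} \<in> E" "{b,c} \<in> E" "{c,d} \<in> E" "{d,a} \<in> E" using that by auto
    have nb: "b \<notin> W" "c \<notin> W" "d \<notin> W" using that disj by auto
    have C1: "{b,c} \<in> EC" "{c,d} \<in> EC" using BW[of b c] BW[of c d] E4 nb unfolding EC_def by auto
    have P: "{{b,c},{c,d}} \<in> adjE EC" unfolding adjE_def using C1 that(1)
      by (auto simp: doubleton_eq_iff)
    have D: "\<Union>{{b,c},{c,d}} - \<Inter>{{b,c},{c,d}} = {b,d}" using that(1) by auto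
    have "({{b,c},{c,d}}, a) \<in> S" unfolding S_def using P D E4 that(4) by (auto simp: insert_commute)
    moreover have "f ({{b,c},{c,d}}, a) = C" unfolding f_def using D that(2) by (auto simp: insert_commute)
    ultimately show ?thesis by force
  qed
  have L2: "C \<in> f ` S" if "distinct [a,b,c,d]" "C = {{a,b},{b,c},{c,d},{d,a}}" "C \<subseteq> E"
      "a \<in> W" "C \<inter> EC \<noteq> {}" for C a b c d
  proof -
    have E4: "{a,b} \<in> E" "{b,c} \<in> E" "{c,d} \<in> E" "{d,a} \<in> E" using that(2,3) by auto
    have nb: "b \<notin> W" using WW[OF E4(1)] that(4) by blast
    have nd: "d \<notin> W" using WW[OF E4(4)] that(4) by blast
    have nc: "c \<notin> W"
    proof
      assume "c \<in> W"
      then have "{a,b} \<in> EB" "{b,c} \<in> EB" "{c,d} \<in> EB" "{d,a} \<in> EB"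
        using BW[OF E4(1)] BW[OF E4(2)] BW[OF E4(3)] BW[OF E4(4)] that(4) by auto
      then have "C \<subseteq> EB" using that(2) by simp
      then show False using that(5) unfolding EC_def by blast
    qed
    have "b \<in> U" using VU[OF E4(2)] nb by blast
    moreover have "c \<in> U" using VU[OF E4(3)] nc by blast
    moreover have "d \<in> U" using VU[OF E4(4)] nd by blast
    ultimately show ?thesis using L[OF that(1-4)] by blast
  qed
  have Mx_img: "Mx = f ` S"
  proof
    show "Mx \<subseteq> f ` S"
    proof
      fix C assume C: "C \<in> Mx"
      then have CfE: "C \<in> fcE E" unfolding Mx_def by simp
      then have CsE: "C \<subseteq> E" unfolding fcE_def by simp
      have "\<exists>a b c d. distinct [a,b,c,d] \<and> C = {{a,b},{b,c},{c,d},{d,a}}"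
        using CfE unfolding fcE_def mem_Collect_eq by (rule conjunct2)
      then obtain a b c d where abcd0: "distinct [a,b,c,d]" "C = {{a,b},{b,c},{c,d},{d,a}}"
        by (elim exE conjE)
      note abcd = abcd0 CsE
      have CEC: "C \<inter> EC \<noteq> {}" using C unfolding Mx_def by blast
      have E4: "{a,b} \<in> E" "{b,c} \<in> E" "{c,d} \<in> E" "{d,a} \<in> E" using abcd(2,3) by auto
      have notall: "a \<in> W \<or> b \<in> W \<or> c \<in> W \<or> d \<in> W"
      proof (rule ccontr)
        assume "\<not> ?thesis"
        then have "{a,b} \<notin> EB" "{b,c} \<notin> EB" "{c,d} \<notin> EB" "{d,a} \<notin> EB"
          using BW[OF E4(1)] BW[OF E4(2)] BW[OF E4(3)] BW[OF E4(4)] by auto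
        then have "C \<inter> EB = {}" using abcd(2) by simp
        then show False using C unfolding Mx_def by blast
      qed
      have r1: "C = {{b,c},{c,d},{d,a},{a,b}}" "C = {{c,d},{d,a},{a,b},{b,c}}" "C = {{d,a},{a,b},{b,c},{c,d}}"
        using abcd(2) by (simp_all add: insert_commute)
      have dst: "distinct [b,c,d,a]" "distinct [c,d,a,b]" "distinct [d,a,b,c]" using abcd(1) by auto
      show "C \<in> f ` S"
        using notall L2[OF abcd(1,2,3) _ CEC] L2[OF dst(1) r1(1) abcd(3) _ CEC]
          L2[OF dst(2) r1(2) abcd(3) _ CEC] L2[OF dst(3) r1(3) abcd(3) _ CEC] by blast
    qed
    show "f ` S \<subseteq> Mx"
    proof
      fix C assume "C \<in> f ` S"
      then obtain P w where Pw: "(P,w) \<in> S" "C = f (P,w)" by auto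
      obtain x p q where s: "P = {{x,p},{x,q}}" "distinct [x,p,q]" "x \<in> U" "p \<in> U" "q \<in> U"
         "w \<in> W" "{w,p} \<in> E" "{w,q} \<in> E" "{x,p} \<in> EC" "{x,q} \<in> EC"
         "f (P,w) = {{x,p},{x,q},{w,p},{w,q}}" by (insert struct[OF Pw(1)], elim exE conjE, rule that, assumption+)
      have wd: "w \<noteq> x" "w \<noteq> p" "w \<noteq> q" using s(3,4,5,6) disj by auto
      have Ce: "C = {{x,p},{x,q},{w,p},{w,q}}" using s(11) Pw(2) by simp
      have "C = {{w,p},{p,x},{x,q},{q,w}}" unfolding Ce by (simp add: insert_commute)
      moreover have "distinct [w,p,x,q]" using s(2) wd by auto
      moreover have "C \<subseteq> E" unfolding Ce using s(7,8,9,10) EC_def by auto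
      ultimately have "C \<in> fcE E" unfolding fcE_def by blast
      moreover have "{w,p} \<in> EB" using BW[OF s(7)] s(6) by blast
      moreover have "{w,p} \<in> C" "{x,p} \<in> C" unfolding Ce by simp_all
      ultimately show "C \<in> Mx" unfolding Mx_def using s(9) by blast
    qed
  qed
  have inj: "inj_on f S"
  proof (rule inj_onI)
    fix z1 z2 assume z: "z1 \<in> S" "z2 \<in> S" "f z1 = f z2"
    obtain P w where z1: "z1 = (P,w)" by (cases z1)
    obtain P' w' where z2: "z2 = (P',w')" by (cases z2)
    have h1: "(P,w) \<in> S" using z z1 by simp
    have h2: "(P',w') \<in> S" using z z2 by simp
    obtain x p q where s: "P = {{x,p},{x,q}}" "distinct [x,p,q]" "x \<in> U" "p \<in> U" "q \<in> U"
         "w \<in> W" "{w,p} \<in> E" "{w,q} \<in> E" "{x,p} \<in> EC" "{x,q} \<in> EC"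
         "f (P,w) = {{x,p},{x,q},{w,p},{w,q}}" by (insert struct[OF h1], elim exE conjE, rule that, assumption+)
    obtain x' p' q' where s': "P' = {{x',p'},{x',q'}}" "distinct [x',p',q']" "x' \<in> U" "p' \<in> U" "q' \<in> U"
         "w' \<in> W" "{w',p'} \<in> E" "{w',q'} \<in> E" "{x',p'} \<in> EC" "{x',q'} \<in> EC"
         "f (P',w') = {{x',p'},{x',q'},{w',p'},{w',q'}}" by (insert struct[OF h2], elim exE conjE, rule that, assumption+)
    have nEC: "{w,p} \<notin> EC" "{w,q} \<notin> EC" "{w',p'} \<notin> EC" "{w',q'} \<notin> EC"
      using ECU s(6) s'(6) disj by blast+
    have "f (P,w) \<inter> EC = {{x,p},{x,q}}" unfolding s(11) using s(9,10) nEC(1,2) by auto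
    moreover have "f (P',w') \<inter> EC = {{x',p'},{x',q'}}" unfolding s'(11) using s'(9,10) nEC(3,4) by auto
    ultimately have PP: "P = P'" using z(3) z1 z2 s(1) s'(1) by simp
    have "\<Union>(f (P,w)) \<inter> W = {w}" unfolding s(11) using s(3,4,5,6) disj by auto
    moreover have "\<Union>(f (P',w')) \<inter> W = {w'}" unfolding s'(11) using s'(3,4,5,6) disj by auto
    ultimately have "w = w'" using z(3) z1 z2 by simp
    then show "z1 = z2" using PP z1 z2 by simp
  qed
  have finAdj: "finite (adjE EC)"
  proof -
    have "adjE EC \<subseteq> Pow EC" unfolding adjE_def by auto
    thus ?thesis using finC finite_subset by blast
  qed
  have "card Mx = card S" unfolding Mx_img by (rule card_image[OF inj])
  also have "\<dots> = (\<Sum>P\<in>adjE EC. card {w\<in>W. \<forall>y\<in>\<Union>P - \<Inter>P. {w, y} \<in> E})"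
    unfolding S_def using finAdj finW by (simp add: card_SigmaI)
  finally have cM: "card Mx = (\<Sum>P\<in>adjE EC. card {w\<in>W. \<forall>y\<in>\<Union>P - \<Inter>P. {w, y} \<in> E})" .
  show ?thesis unfolding part EC_def[symmetric]
    using d1 d2 fin[OF finB] fin[OF finC] finMx cM
    by (simp add: card_Un_disjoint)
qed

theorem theorem4p2:
  fixes G B :: "'a ugraph" and U W :: "'a set" and n m :: nat
  assumes "sachs4_minimal n m G"
    and "spanning_subgraph B G"
    and "difference_graph B U W"
    and "verts (co_graph G B) \<subseteq> U"
  shows "a4 G = a4 B + a4 (co_graph G B)
           + int (\<Sum>e\<in>edges (co_graph G B). eps_del B e)
           - 2 * int (\<Sum>P\<in>adj_edge_pairs (co_graph G B). n_W G W P)"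
proof -
  define E where "E = edges G"
  define EB where "EB = edges B"
  have "G \<in> graph_class n m" using assms(1) by (simp add: sachs4_minimal_def)
  then have "connected_graph G" by (simp add: graph_class_def)
  then have sg: "simple_graph G" by (simp add: connected_graph_def)
  have finV: "finite (verts G)" using sg unfolding simple_graph_def by (rule conjunct1)
  have twoG: "\<forall>e\<in>E. \<exists>u v. u \<in> verts G \<and> v \<in> verts G \<and> u \<noteq> v \<and> e = {u, v}"
    using sg unfolding simple_graph_def E_def by (rule conjunct2)
  have "E \<subseteq> Pow (verts G)"
  proof
    fix e assume "e \<in> E"
    have "\<exists>u v. u \<in> verts G \<and> v \<in> verts G \<and> u \<noteq> v \<and> e = {u, v}" using twoG \<open>e \<in> E\<close> by (rule bspec)
    then obtain u v where "u \<in> verts G" "v \<in> verts G" "e = {u, v}" by blast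
    then show "e \<in> Pow (verts G)" by simp
  qed
  then have finE: "finite E" by (rule finite_subset) (simp add: finV)
  have vB: "verts B = verts G" and sub: "EB \<subseteq> E"
    using assms(2) unfolding spanning_subgraph_def E_def EB_def by auto
  have dg: "simple_graph B \<and> U \<inter> W = {} \<and> U \<union> W = verts B \<and>
     (\<forall>e\<in>edges B. \<exists>u w. u \<in> U \<and> w \<in> W \<and> e = {u, w})"
    using assms(3) unfolding difference_graph_def by blast
  have disj: "U \<inter> W = {}" using dg by blast
  have UW: "U \<union> W = verts G" using dg vB by simp
  have Bed: "\<forall>e\<in>EB. \<exists>u w. u \<in> U \<and> w \<in> W \<and> e = {u, w}" using dg unfolding EB_def by blast
  have coE: "edges (co_graph G B) = E - EB" unfolding co_graph_def edges_def E_def EB_def by simp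
  have coV: "verts (co_graph G B) = \<Union>(E - EB)" unfolding co_graph_def verts_def E_def EB_def edges_def by simp
  have Ced: "\<forall>e\<in>E - EB. e \<subseteq> U" using assms(4) coV by blast
  have finW: "finite W" using UW finV by (metis finite_Un)
  have twoE: "\<forall>e\<in>E. \<exists>u v. u \<noteq> v \<and> u \<in> U \<union> W \<and> v \<in> U \<union> W \<and> e = {u, v}"
  proof
    fix e assume "e \<in> E"
    have "\<exists>u v. u \<in> verts G \<and> v \<in> verts G \<and> u \<noteq> v \<and> e = {u, v}" using twoG \<open>e \<in> E\<close> by (rule bspec)
    then obtain u v where "u \<in> verts G" "v \<in> verts G" "u \<noteq> v" "e = {u, v}" by blast
    then show "\<exists>u v. u \<noteq> v \<and> u \<in> U \<union> W \<and> v \<in> U \<union> W \<and> e = {u, v}" unfolding UW by blast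
  qed
  have ne: "\<forall>e\<in>EB \<union> (E - EB). e \<noteq> {}"
  proof
    fix e assume "e \<in> EB \<union> (E - EB)"
    then have "e \<in> E" using sub by blast
    have "\<exists>u v. u \<in> verts G \<and> v \<in> verts G \<and> u \<noteq> v \<and> e = {u, v}" using twoG \<open>e \<in> E\<close> by (rule bspec)
    then obtain u v where "e = {u, v}" by blast
    then show "e \<noteq> {}" by simp
  qed
  have finB: "finite EB" using finE sub finite_subset by blast
  have EBE: "EB \<union> (E - EB) = E" using sub by blast
  have tmeq: "two_matchings H = tmE (edges H)" for H :: "'a ugraph"
    unfolding two_matchings_def tmE_def by simp
  have fceq: "four_cycles H = fcE (edges H)" for H :: "'a ugraph"
    unfolding four_cycles_def fcE_def by simp
  have adjeq: "adj_edge_pairs H = adjE (edges H)" for H :: "'a ugraph"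
    unfolding adj_edge_pairs_def adjE_def by simp
  have T: "card (two_matchings G) = card (two_matchings B) + card (two_matchings (co_graph G B))
     + (\<Sum>e\<in>edges (co_graph G B). eps_del B e)"
    using tm_split[OF finB _ _ ne] finE EBE
    unfolding tmeq coE eps_del_def E_def[symmetric] EB_def[symmetric] by auto
  have F: "card (four_cycles G) = card (four_cycles B) + card (four_cycles (co_graph G B))
     + (\<Sum>P\<in>adj_edge_pairs (co_graph G B). n_W G W P)"
    using fc_split[OF finE sub twoE Bed Ced disj finW]
    unfolding fceq adjeq coE n_W_def E_def[symmetric] EB_def[symmetric] by simp
  show ?thesis unfolding a4_def T F by simp
qed

end
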